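(* Let $|p|<1$, $|P|<1$, and let $(a_k),(b_k),(c_k),(d_k),(A_k),(B_k),(C_k),(D_k)$ ($k\ge0$) be sequences of nonzero complex numbers such that all expressions below are well defined. For $k\ge 0$ put $$\lambda_k=\frac{\theta(a_k,a_k/(b_kc_k),a_k/(b_kd_k),a_k/(c_kd_k);p)}{\theta(a_k/(b_kc_kd_k),a_k/d_k,a_k/c_k,a_k/b_k;p)}\prod_{j=0}^{k-1}\frac{\theta(b_j,c_j,d_j,a_j^2/(b_jc_jd_j);p)}{\theta(a_j/b_j,a_j/c_j,a_j/d_j,b_jc_jd_j/a_j;p)},$$ $$\Lambda_k=\frac{\theta(A_k,A_k/(B_kC_k),A_k/(B_kD_k),A_k/(C_kD_k);P)}{\theta(A_k/(B_kC_kD_k),A_k/D_k,A_k/C_k,A_k/B_k;P)}\prod_{j=0}^{k-1}\frac{\theta(B_j,C_j,D_j,A_j^2/(B_jC_jD_j);P)}{\theta(A_j/B_j,A_j/C_j,A_j/D_j,B_jC_jD_j/A_j;P)}.$$ Then for every $n=0,1,2,\ldots$, $$\sum_{k=0}^n\lambda_k\Bigg\{1-\prod_{j=0}^{n-k}\frac{\theta(B_j,C_j,D_j,A_j^2/(B_jC_jD_j);P)}{\theta(A_j/B_j,A_j/C_j,A_j/D_j,B_jC_jD_j/A_j;P)}\Bigg\} =\sum_{k=0}^n\Lambda_k\Bigg\{1-\prod_{j=0}^{n-k}\frac{\theta(b_j,c_j,d_j,a_j^2/(b_jc_jd_j);p)}{\theta(a_j/b_j,a_j/c_j,a_j/d_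j,b_jc_jd_j/a_j;p)}\Bigg\}.$$
   Context: For $|p|<1$ and $x\neq 0$, $\theta(x;p)=(x;p)_\infty(p/x;p)_\infty$ where $(x;p)_\infty=\prod_{k\ge 0}(1-xp^k)$, and $\theta(x_1,\dots,x_m;p)=\prod_{i=1}^m\theta(x_i;p)$. Empty products equal $1$. *)

theory Defs
  imports "HOL-Analysis.Analysis"
begin

definition qpoch_inf :: "complex \<Rightarrow> complex \<Rightarrow> complex" where
  "qpoch_inf x p = (\<Prod>k. 1 - x * p ^ k)"

definition theta :: "complex \<Rightarrow> complex \<Rightarrow> complex" where
  "theta x p = qpoch_inf x p * qpoch_inf (p / x) p"

definition theta_list :: "complex list \<Rightarrow> complex \<Rightarrow> complex" where
  "theta_list xs p = prod_list (map (\<lambda>x. theta x p) xs)"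

definition wfac :: "(nat \<Rightarrow> complex) \<Rightarrow> (nat \<Rightarrow> complex) \<Rightarrow> (nat \<Rightarrow> complex) \<Rightarrow> (nat \<Rightarrow> complex)
    \<Rightarrow> complex \<Rightarrow> nat \<Rightarrow> complex" where
  "wfac a b c d p j =
     theta_list [b j, c j, d j, a j ^ 2 / (b j * c j * d j)] p /
     theta_list [a j / b j, a j / c j, a j / d j, b j * c j * d j / a j] p"

definition lam :: "(nat \<Rightarrow> complex) \<Rightarrow> (nat \<Rightarrow> complex) \<Rightarrow> (nat \<Rightarrow> complex) \<Rightarrow> (nat \<Rightarrow> complex)
    \<Rightarrow> complex \<Rightarrow> nat \<Rightarrow> complex" where
  "lam a b c d p k =
     theta_list [a k, a k / (b k * c k), a k / (b k * d k), a k / (c k * d k)] p /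
     theta_list [a k / (b k * c k * d k), a k / d k, a k / c k, a k / b k] p *
     (\<Prod>j<k. wfac a b c d p j)"

end

theory Submission
  imports Defs "HOL-Complex_Analysis.Complex_Analysis"
begin

lemma qp_abs_conv:
  assumes "norm (p::complex) < 1"
  shows "abs_convergent_prod (\<lambda>k. 1 - x * p^k)"
proof (rule summable_imp_abs_convergent_prod)
  have "summable (\<lambda>k. norm x * norm p ^ k)"
    using assms by (intro summable_mult summable_geometric) auto
  then show "summable (\<lambda>k. norm (1 - x * p ^ k - 1))"
    by (simp add: norm_mult norm_power)
qed

lemma qp_conv:
  assumes "norm (p::complex) < 1"
  shows "convergent_prod (\<lambda>k. 1 - x * p^k)"
  using abs_convergent_prod_imp_convergent_prod[OF qp_abs_conv[OF assms]] .

lemma qp_LIMSEQ: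
  assumes "norm (p::complex) < 1"
  shows "(\<lambda>n. \<Prod>k<n. 1 - x * p^k) \<longlonglongrightarrow> qpoch_inf x p"
proof -
  have "(\<lambda>n. \<Prod>k\<le>n. 1 - x * p^k) \<longlonglongrightarrow> qpoch_inf x p"
    unfolding qpoch_inf_def by (rule convergent_prod_LIMSEQ[OF qp_conv[OF assms]])
  then have "(\<lambda>n. \<Prod>k<Suc n. 1 - x * p^k) \<longlonglongrightarrow> qpoch_inf x p"
    by (simp add: lessThan_Suc_atMost)
  then show ?thesis by (rule filterlim_sequentially_Suc[THEN iffD1])
qed

lemma qp_shift:
  assumes "norm (p::complex) < 1"
  shows "qpoch_inf x p = (1 - x) * qpoch_inf (p * x) p"
proof -
  have "(\<lambda>n. \<Prod>k<Suc n. 1 - x * p^k) \<longlonglongrightarrow> qpoch_inf x p"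
    using qp_LIMSEQ[OF assms] by (rule LIMSEQ_Suc)
  moreover have "(\<lambda>n. \<Prod>k<Suc n. 1 - x * p^k) = (\<lambda>n. (1 - x) * (\<Prod>k<n. 1 - (p * x) * p^k))"
    by (rule ext, subst prod.lessThan_Suc_shift) (simp add: algebra_simps)
  moreover have "(\<lambda>n. (1 - x) * (\<Prod>k<n. 1 - (p * x) * p^k)) \<longlonglongrightarrow> (1 - x) * qpoch_inf (p * x) p"
    by (intro tendsto_mult tendsto_const qp_LIMSEQ[OF assms])
  ultimately show ?thesis using LIMSEQ_unique by metis
qed

lemma qp_nonzero:
  assumes "norm (p::complex) < 1" "\<And>k. x * p^k \<noteq> 1"
  shows "qpoch_inf x p \<noteq> 0"
  unfolding qpoch_inf_def
  by (rule prodinf_nonzero[OF qp_conv[OF assms(1)]]) (use assms(2) in \<open>auto simp: right_minus_eq\<close>)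

lemma qp_zero_x: "qpoch_inf 0 p = 1"
  by (simp add: qpoch_inf_def)

lemma qp_holo:
  assumes "norm (p::complex) < 1"
  shows "(\<lambda>x. qpoch_inf x p) holomorphic_on A"
proof (rule holomorphic_on_subset)
  define P where "P = (\<lambda>N x. \<Prod>k<N. 1 - x * p^k)"
  show "(\<lambda>x. qpoch_inf x p) holomorphic_on UNIV"
  proof (rule holomorphic_uniform_sequence)
    fix z :: complex
    define R where "R = norm z + 1"
    have R: "R > 0" by (simp add: R_def add_nonneg_pos)
    have uc: "uniformly_convergent_on (cball 0 R) P"
      unfolding P_def
    proof (rule uniformly_convergent_on_prod')
      show "uniformly_convergent_on (cball 0 R) (\<lambda>N x. \<Sum>n<N. norm (1 - x * p^n - 1))"
      proof (rule Weierstrass_m_test'_ev)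
        show "\<forall>\<^sub>F n in sequentially. \<forall>x\<in>cball 0 R. norm (norm (1 - x * p ^ n - 1)) \<le> R * norm p ^ n"
          by (intro always_eventually allI ballI) 
             (auto simp: norm_mult norm_power intro!: mult_right_mono)
        show "summable (\<lambda>n. R * norm p ^ n)"
          using assms by (intro summable_mult summable_geometric) auto
      qed
    qed (auto intro!: continuous_intros)
    then obtain g where g: "uniform_limit (cball 0 R) P g sequentially"
      by (auto simp: uniformly_convergent_on_def)
    have "uniform_limit (cball 0 R) P (\<lambda>x. qpoch_inf x p) sequentially"
    proof (rule uniform_limit_cong[THEN iffD1, OF _ _ g])
      fix x :: complex assume "x \<in> cball 0 R"
      with g have "(\<lambda>n. P n x) \<longlonglongrightarrow> g x"
        by (metis tendsto_uniform_limitI)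
      moreover have "(\<lambda>n. P n x) \<longlonglongrightarrow> qpoch_inf x p"
        unfolding P_def by (rule qp_LIMSEQ[OF assms])
      ultimately show "g x = qpoch_inf x p"
        using tendsto_unique by force
    qed auto
    hence "uniform_limit (cball z 1) P (\<lambda>x. qpoch_inf x p) sequentially"
      by (rule uniform_limit_on_subset) (simp add: cball_subset_cball_iff R_def)
    thus "\<exists>d>0. cball z d \<subseteq> UNIV \<and> uniform_limit (cball z d) P (\<lambda>x. qpoch_inf x p) sequentially"
      by (intro exI[of _ 1]) auto
  qed (auto intro!: holomorphic_intros simp: P_def)
qed auto

lemma th_def2:
  assumes "norm (p::complex) < 1"
  shows "theta z p = (1 - z) * qpoch_inf (p * z) p * qpoch_inf (p / z) p"
  unfolding theta_def by (subst qp_shift[OF assms]) simp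

lemma th_one: assumes "norm (p::complex) < 1" shows "theta 1 p = 0"
  using th_def2[OF assms, of 1] by simp

lemma th_p0: "theta z 0 = 1 - z"
proof -
  have "qpoch_inf z 0 = 1 - z"
    using qp_shift[of 0 z] by (simp add: qp_zero_x)
  then show ?thesis by (simp add: theta_def qp_zero_x)
qed

lemma th_inv:
  assumes "norm (p::complex) < 1" "z \<noteq> 0"
  shows "theta (1 / z) p = - theta z p / z"
proof -
  have "theta (1/z) p = qpoch_inf (1/z) p * qpoch_inf (p * z) p"
    by (simp add: theta_def)
  also have "qpoch_inf (1/z) p = (1 - 1/z) * qpoch_inf (p / z) p"
    by (subst qp_shift[OF assms(1)]) simp
  finally show ?thesis using assms(2)
    by (simp add: th_def2[OF assms(1), of z] field_simps)
qed

lemma th_shift: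
  assumes "norm (p::complex) < 1" "p \<noteq> 0" "z \<noteq> 0"
  shows "theta (p * z) p = - theta z p / z"
proof -
  have "theta (p * z) p = qpoch_inf (p * z) p * qpoch_inf (1 / z) p"
    using assms by (simp add: theta_def)
  also have "qpoch_inf (1/z) p = (1 - 1/z) * qpoch_inf (p / z) p"
    by (subst qp_shift[OF assms(1)]) simp
  finally show ?thesis using assms(3)
    by (simp add: th_def2[OF assms(1), of z] field_simps)
qed

lemma th_zero_powi:
  assumes "norm (p::complex) < 1" "p \<noteq> 0"
  shows "theta (p powi m) p = 0"
proof (induction m rule: int_induct[where k=0])
  case base
  then show ?case using th_one[OF assms(1)] by simp
next
  case (step1 i)
  have "p powi (i + 1) = p * p powi i" using assms(2) by (simp add: power_int_add)
  then show ?case using step1 th_shift[OF assms, of "p powi i"] assms(2) by simp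
next
  case (step2 i)
  have e: "p powi i = p * p powi (i - 1)" using assms(2) by (simp add: power_int_diff)
  have "theta (p powi i) p = - theta (p powi (i - 1)) p / p powi (i - 1)"
    by (subst e, rule th_shift[OF assms]) (use assms(2) in simp)
  then show ?case using step2 assms(2) by simp
qed

lemma th_zero_imp:
  assumes "norm (p::complex) < 1" "p \<noteq> 0" "z \<noteq> 0" "theta z p = 0"
  shows "\<exists>m::int. z = p powi m"
proof -
  have "qpoch_inf z p = 0 \<or> qpoch_inf (p / z) p = 0" using assms(4) by (simp add: theta_def)
  then show ?thesis
  proof
    assume "qpoch_inf z p = 0"
    then obtain k where "z * p^k = 1" using qp_nonzero[OF assms(1)] by blast
    then have "z = p powi (- int k)" using assms(2)
      by (simp add: power_int_minus field_simps)
    then show ?thesis by blast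
  next
    assume "qpoch_inf (p / z) p = 0"
    then obtain k where "p / z * p^k = 1" using qp_nonzero[OF assms(1)] by blast
    then have "z = p ^ Suc k" using assms(2,3)
      by (auto simp: field_simps)
    then have "z = p powi (int (Suc k))" by (metis power_int_of_nat)
    then show ?thesis by blast
  qed
qed

lemma th_zero_iff:
  assumes "norm (p::complex) < 1" "p \<noteq> 0" "z \<noteq> 0"
  shows "theta z p = 0 \<longleftrightarrow> (\<exists>m::int. z = p powi m)"
  using th_zero_imp[OF assms] th_zero_powi[OF assms(1,2)] by blast

lemma th_holo:
  assumes "norm (p::complex) < 1"
  shows "(\<lambda>z. theta z p) holomorphic_on - {0}"
proof -
  have h: "(\<lambda>z. p / z) holomorphic_on - {0}" by (auto intro!: holomorphic_intros)
  have "(\<lambda>z. qpoch_inf (p / z) p) holomorphic_on - {0}"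
    using holomorphic_on_compose[OF h qp_holo[OF assms]] by (simp add: o_def)
  then show ?thesis unfolding theta_def
    by (intro holomorphic_intros qp_holo[OF assms])
qed

lemma th_der:
  assumes "norm (p::complex) < 1" "z \<noteq> 0"
  shows "((\<lambda>z. theta z p) has_field_derivative deriv (\<lambda>z. theta z p) z) (at z)"
  by (rule holomorphic_derivI[OF th_holo[OF assms(1)]]) (use assms(2) in auto)

lemma th_deriv_rel:
  assumes "norm (p::complex) < 1" "p \<noteq> 0" "z \<noteq> 0" "theta z p = 0"
  shows "p * deriv (\<lambda>z. theta z p) (p * z) = - deriv (\<lambda>z. theta z p) z / z"
proof -
  define D where "D = deriv (\<lambda>z. theta z p)"
  have pz: "p * z \<noteq> 0" using assms by simp
  have d1: "((\<lambda>w. theta (p * w) p) has_field_derivative D (p * z) * p) (at z)"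
    using DERIV_chain2[where g="\<lambda>w. p * w" and x=z, OF th_der[OF assms(1) pz]]
    by (auto simp: D_def intro!: derivative_eq_intros)
  have d2: "((\<lambda>w. - theta w p / w) has_field_derivative (- D z / z)) (at z)"
    using th_der[OF assms(1,3)] assms(3,4)
    by (auto simp: D_def intro!: derivative_eq_intros simp: field_simps power2_eq_square)
  have d1': "((\<lambda>w. - theta w p / w) has_field_derivative D (p * z) * p) (at z)"
    by (rule has_field_derivative_transform_within_open[OF d1, of "-{0}"])
       (use assms in \<open>auto simp: th_shift\<close>)
  have "D (p * z) * p = - D z / z" using DERIV_unique[OF d1' d2] .
  then show ?thesis by (simp add: D_def mult.commute)
qed

lemma th_deriv_one:
  assumes "norm (p::complex) < 1"
  shows "deriv (\<lambda>z. theta z p) 1 \<noteq> 0"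
proof -
  define R where "R = (\<lambda>z. qpoch_inf (p * z) p * qpoch_inf (p / z) p)"
  have eq: "(\<lambda>z. theta z p) = (\<lambda>z. (1 - z) * R z)"
    by (rule ext) (simp add: R_def th_def2[OF assms] mult.assoc)
  have g1: "(\<lambda>z. p * z) holomorphic_on - {0}" by (auto intro!: holomorphic_intros)
  have h1: "(\<lambda>z. qpoch_inf (p * z) p) holomorphic_on - {0}"
    using holomorphic_on_compose[OF g1 qp_holo[OF assms]] by (simp add: o_def)
  have g2: "(\<lambda>z. p / z) holomorphic_on - {0}" by (auto intro!: holomorphic_intros)
  have h2: "(\<lambda>z. qpoch_inf (p / z) p) holomorphic_on - {0}"
    using holomorphic_on_compose[OF g2 qp_holo[OF assms]] by (simp add: o_def)
  have "R holomorphic_on - {0}" unfolding R_def using h1 h2 by (intro holomorphic_intros)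
  then have dR: "(R has_field_derivative deriv R 1) (at 1)"
    by (rule holomorphic_derivI) auto
  have "((\<lambda>z. (1 - z) * R z) has_field_derivative - R 1) (at 1)"
    using dR by (auto intro!: derivative_eq_intros)
  then have "deriv (\<lambda>z. theta z p) 1 = - R 1"
    unfolding eq by (rule DERIV_imp_deriv)
  moreover have "qpoch_inf p p \<noteq> 0"
  proof (rule qp_nonzero[OF assms])
    fix k
    have "norm p ^ k \<le> 1" using assms by (intro power_le_one) auto
    then have "norm p * norm p ^ k \<le> norm p" by (simp add: mult_left_le)
    then have "norm (p * p ^ k) < 1"
      using assms by (simp add: norm_mult norm_power)
    then show "p * p ^ k \<noteq> 1" by auto
  qed
  ultimately show ?thesis by (simp add: R_def)
qed

lemma th_deriv_powi:
  assumes "norm (p::complex) < 1" "p \<noteq> 0"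
  shows "deriv (\<lambda>z. theta z p) (p powi m) \<noteq> 0"
proof (induction m rule: int_induct[where k=0])
  case base
  then show ?case using th_deriv_one[OF assms(1)] by simp
next
  case (step1 i)
  have e: "p powi (i + 1) = p * p powi i" using assms(2) by (simp add: power_int_add)
  have "p * deriv (\<lambda>z. theta z p) (p * p powi i) = - deriv (\<lambda>z. theta z p) (p powi i) / p powi i"
    by (rule th_deriv_rel[OF assms]) (use assms th_zero_powi[OF assms] in auto)
  then show ?case using step1 assms(2) e by auto
next
  case (step2 i)
  have e: "p powi i = p * p powi (i - 1)" using assms(2) by (simp add: power_int_diff)
  have "p * deriv (\<lambda>z. theta z p) (p * p powi (i - 1)) = - deriv (\<lambda>z. theta z p) (p powi (i - 1)) / p powi (i - 1)"
    by (rule th_deriv_rel[OF assms]) (use assms th_zero_powi[OF assms] in auto)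
  then show ?case using step2 assms(2) e[symmetric] by auto
qed

lemma th_deriv_nz:
  assumes "norm (p::complex) < 1" "p \<noteq> 0" "w \<noteq> 0" "theta w p = 0"
  shows "deriv (\<lambda>z. theta z p) w \<noteq> 0"
  using th_zero_imp[OF assms] th_deriv_powi[OF assms(1,2)] by auto

definition gg :: "complex \<Rightarrow> complex \<Rightarrow> complex \<Rightarrow> complex" where
  "gg p s x = theta (x * s) p * theta (x / s) p"

definition FF :: "complex \<Rightarrow> complex \<Rightarrow> complex \<Rightarrow> complex \<Rightarrow> complex \<Rightarrow> complex" where
  "FF p y u v x = gg p y x * gg p v u - gg p v x * gg p y u - (u / y) * gg p v y * gg p u x"

lemma gg_shift:
  assumes "norm p < 1" "p \<noteq> 0" "x \<noteq> 0" "s \<noteq> 0"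
  shows "gg p s (p * x) = gg p s x / x^2"
proof -
  have h1: "theta (p * x * s) p = - theta (x * s) p / (x * s)"
    using th_shift[OF assms(1,2), of "x * s"] assms by (simp add: mult.assoc)
  have h2: "theta (p * x / s) p = - theta (x / s) p / (x / s)"
    using th_shift[OF assms(1,2), of "x / s"] assms by simp
  show ?thesis unfolding gg_def h1 h2 using assms(3,4)
    by (simp add: field_simps power2_eq_square)
qed

lemma gg_inv:
  assumes "norm p < 1" "x \<noteq> 0" "s \<noteq> 0"
  shows "gg p s (1 / x) = gg p s x / x^2"
proof -
  have h1: "theta (1 / x * s) p = - theta (x / s) p / (x / s)"
    using th_inv[OF assms(1), of "x / s"] assms by simp
  have h2: "theta (1 / x / s) p = - theta (x * s) p / (x * s)"
    using th_inv[OF assms(1), of "x * s"] assms by simp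
  show ?thesis unfolding gg_def h1 h2 using assms(2,3)
    by (simp add: field_simps power2_eq_square)
qed

lemma FF_shift:
  assumes "norm p < 1" "p \<noteq> 0" "x \<noteq> 0" "y \<noteq> 0" "u \<noteq> 0" "v \<noteq> 0"
  shows "FF p y u v (p * x) = FF p y u v x / x^2"
  using assms by (simp add: FF_def gg_shift diff_divide_distrib)

lemma FF_inv:
  assumes "norm p < 1" "x \<noteq> 0" "y \<noteq> 0" "u \<noteq> 0" "v \<noteq> 0"
  shows "FF p y u v (1 / x) = FF p y u v x / x^2"
  using assms by (simp add: FF_def gg_inv diff_divide_distrib)

lemma FF_u:
  assumes "norm p < 1"
  shows "FF p y u v u = 0"
  using th_one[OF assms] by (simp add: FF_def gg_def)

lemma FF_v:
  assumes "norm p < 1" "y \<noteq> 0" "u \<noteq> 0" "v \<noteq> 0"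
  shows "FF p y u v v = 0"
proof -
  have a: "theta (v / y) p = - theta (y / v) p / (y / v)"
    using th_inv[OF assms(1), of "y / v"] assms by simp
  have b: "theta (u / v) p = - theta (v / u) p / (v / u)"
    using th_inv[OF assms(1), of "v / u"] assms by simp
  show ?thesis using assms th_one[OF assms(1)]
    by (simp add: FF_def gg_def a b field_simps)
qed

lemma FF_powi:
  assumes "norm p < 1" "p \<noteq> 0" "z \<noteq> 0" "y \<noteq> 0" "u \<noteq> 0" "v \<noteq> 0" "FF p y u v z = 0"
  shows "FF p y u v (p powi m * z) = 0"
proof (induction m rule: int_induct[where k=0])
  case base
  then show ?case using assms by simp
next
  case (step1 i)
  have e: "p powi (i + 1) * z = p * (p powi i * z)" using assms(2) by (simp add: power_int_add)
  have "FF p y u v (p * (p powi i * z)) = FF p y u v (p powi i * z) / (p powi i * z)^2"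
    by (rule FF_shift) (use assms in auto)
  then show ?case unfolding e using step1 by simp
next
  case (step2 i)
  have e: "p powi i * z = p * (p powi (i - 1) * z)" using assms(2) by (simp add: power_int_diff)
  have "FF p y u v (p powi i * z) = FF p y u v (p powi (i - 1) * z) / (p powi (i - 1) * z)^2"
    by (subst e, rule FF_shift) (use assms in auto)
  then show ?case using step2 assms by simp
qed

lemma gg_holo:
  assumes "norm p < 1" "s \<noteq> 0"
  shows "gg p s holomorphic_on - {0}"
proof -
  have a: "(\<lambda>x. x * s) holomorphic_on -{0}" "(\<lambda>x. x / s) holomorphic_on -{0}"
    by (auto intro!: holomorphic_intros)
  have b: "(\<lambda>x. x * s) ` (-{0}) \<subseteq> -{0}" "(\<lambda>x. x / s) ` (-{0}) \<subseteq> -{0}"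
    using assms by auto
  have "(\<lambda>x. theta (x * s) p) holomorphic_on -{0}"
    using holomorphic_on_compose_gen[OF a(1) th_holo[OF assms(1)] b(1)] by (simp add: o_def)
  moreover have "(\<lambda>x. theta (x / s) p) holomorphic_on -{0}"
    using holomorphic_on_compose_gen[OF a(2) th_holo[OF assms(1)] b(2)] by (simp add: o_def)
  ultimately show ?thesis unfolding gg_def[abs_def] by (intro holomorphic_intros)
qed

lemma FF_holo:
  assumes "norm p < 1" "y \<noteq> 0" "u \<noteq> 0" "v \<noteq> 0"
  shows "FF p y u v holomorphic_on - {0}"
  unfolding FF_def[abs_def]
  using gg_holo[OF assms(1,2)] gg_holo[OF assms(1,3)] gg_holo[OF assms(1,4)]
  by (intro holomorphic_intros) auto

lemma gg_zero_FF:
  assumes "norm p < 1" "p \<noteq> 0" "y \<noteq> 0" "u \<noteq> 0" "v \<noteq> 0" "x \<noteq> 0" "gg p u x = 0"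
  shows "FF p y u v x = 0"
proof -
  have "theta (x * u) p = 0 \<or> theta (x / u) p = 0" using assms(7) by (simp add: gg_def)
  then show ?thesis
  proof
    assume "theta (x * u) p = 0"
    then obtain m where "x * u = p powi m" using th_zero_imp[OF assms(1,2)] assms by force
    then have e: "x = p powi m * (1 / u)" using assms by (simp add: field_simps)
    have h: "FF p y u v (1 / u) = 0"
      using FF_inv[OF assms(1) assms(4) assms(3-5)] FF_u[OF assms(1)] by simp
    show ?thesis unfolding e by (rule FF_powi[OF assms(1,2) _ assms(3-5) h]) (use assms in simp)
  next
    assume "theta (x / u) p = 0"
    then obtain m where "x / u = p powi m" using th_zero_imp[OF assms(1,2)] assms by force
    then have e: "x = p powi m * u" using assms by (simp add: field_simps)
    show ?thesis unfolding e
      by (rule FF_powi[OF assms(1,2) _ assms(3-5) FF_u[OF assms(1)]]) (use assms in simp)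
  qed
qed

lemma gg_deriv:
  assumes "norm p < 1" "u \<noteq> 0" "x \<noteq> 0"
  shows "(gg p u has_field_derivative
     deriv (\<lambda>z. theta z p) (x * u) * u * theta (x / u) p
     + deriv (\<lambda>z. theta z p) (x / u) * (1 / u) * theta (x * u) p) (at x)"
proof -
  have xu: "x * u \<noteq> 0" "x / u \<noteq> 0" using assms by auto
  have d1: "((\<lambda>x. theta (x * u) p) has_field_derivative deriv (\<lambda>z. theta z p) (x * u) * u) (at x)"
    by (rule DERIV_chain2[where g="\<lambda>x. x * u" and x=x, OF th_der[OF assms(1) xu(1)]]) (auto intro!: derivative_eq_intros)
  have d2: "((\<lambda>x. theta (x / u) p) has_field_derivative deriv (\<lambda>z. theta z p) (x / u) * (1 / u)) (at x)"
    by (rule DERIV_chain2[where g="\<lambda>x. x / u" and x=x, OF th_der[OF assms(1) xu(2)]]) (use assms in \<open>auto intro!: derivative_eq_intros\<close>)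
  have "gg p u = (\<lambda>x. theta (x * u) p * theta (x / u) p)" by (rule ext) (simp add: gg_def)
  then show ?thesis using DERIV_mult[OF d1 d2] by simp
qed

lemma gg_deriv_nz:
  assumes "norm p < 1" "p \<noteq> 0" "u \<noteq> 0" "x \<noteq> 0" "gg p u x = 0" "theta (u * u) p \<noteq> 0"
  shows "deriv (gg p u) x \<noteq> 0"
proof -
  have xu: "x * u \<noteq> 0" "x / u \<noteq> 0" using assms by auto
  have nb: "\<not> (theta (x * u) p = 0 \<and> theta (x / u) p = 0)"
  proof
    assume "theta (x * u) p = 0 \<and> theta (x / u) p = 0"
    then obtain m k where mk: "x * u = p powi m" "x / u = p powi k"
      using th_zero_imp[OF assms(1,2)] xu by metis
    have "u * u = (x * u) / (x / u)" using assms by (simp add: field_simps)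
    also have "\<dots> = p powi (m - k)" using mk assms(2) by (simp add: power_int_diff)
    finally show False using assms(6) th_zero_powi[OF assms(1,2)] by simp
  qed
  have dd: "deriv (gg p u) x = deriv (\<lambda>z. theta z p) (x * u) * u * theta (x / u) p
     + deriv (\<lambda>z. theta z p) (x / u) * (1 / u) * theta (x * u) p"
    by (rule DERIV_imp_deriv[OF gg_deriv[OF assms(1,3,4)]])
  have "theta (x * u) p = 0 \<or> theta (x / u) p = 0" using assms(5) by (simp add: gg_def)
  then show ?thesis
  proof
    assume h: "theta (x * u) p = 0"
    then have "theta (x / u) p \<noteq> 0" using nb by auto
    then show ?thesis unfolding dd using h th_deriv_nz[OF assms(1,2) xu(1) h] assms by simp
  next
    assume h: "theta (x / u) p = 0"
    then have "theta (x * u) p \<noteq> 0" using nb by auto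
    then show ?thesis unfolding dd using h th_deriv_nz[OF assms(1,2) xu(2) h] assms by simp
  qed
qed

lemma exists_powi_annulus:
  fixes q r :: real
  assumes "0 < q" "q < 1" "0 < r"
  shows "\<exists>n::int. q powi (n + 1) < r \<and> r \<le> q powi n"
proof -
  define t where "t = ln r / ln q"
  define n where "n = floor t"
  have lq: "ln q < 0" using assms by simp
  have n1: "real_of_int n \<le> t" "t < real_of_int n + 1" unfolding n_def by linarith+
  have "t * ln q \<le> real_of_int n * ln q" using n1(1) lq by (simp add: mult_right_mono_neg)
  moreover have "(real_of_int n + 1) * ln q < t * ln q" using n1(2) lq by (simp add: mult_strict_right_mono_neg)
  moreover have "t * ln q = ln r" unfolding t_def using lq by simp
  ultimately have a: "ln r \<le> real_of_int n * ln q" "real_of_int (n + 1) * ln q < ln r" by auto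
  have "q powi n = exp (real_of_int n * ln q)"
    using powr_real_of_int'[of q n] assms by (simp add: powr_def)
  moreover have "q powi (n + 1) = exp (real_of_int (n + 1) * ln q)"
    using powr_real_of_int'[of q "n + 1"] assms by (simp add: powr_def)
  moreover have "r = exp (ln r)" using assms by simp
  ultimately show ?thesis using a
    by (metis exp_le_cancel_iff exp_less_cancel_iff)
qed


lemma core_generic:
  assumes p: "norm p < 1" "p \<noteq> 0" and nz: "y \<noteq> 0" "u \<noteq> 0" "v \<noteq> 0"
    and g1: "theta (u * u) p \<noteq> 0" and g2: "gg p u v \<noteq> 0" and x: "x \<noteq> 0"
  shows "FF p y u v x = 0"
proof -
  define T where "T = gg p u"
  define F where "F = FF p y u v"
  define S where "S = (- {0} :: complex set)"
  define H where "H = (\<lambda>x. if T x = 0 then deriv F x / deriv T x else F x / T x)"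
  have oS: "open S" unfolding S_def by auto
  have hF: "F holomorphic_on S" unfolding F_def S_def by (rule FF_holo[OF p(1) nz])
  have hT: "T holomorphic_on S" unfolding T_def S_def by (rule gg_holo[OF p(1) nz(2)])
  define U where "U = T -` (- {0}) \<inter> S"
  have oU: "open U"
    using continuous_on_open_vimage[OF oS, of T] holomorphic_on_imp_continuous_on[OF hT]
    unfolding U_def by auto
  have US: "U \<subseteq> S" unfolding U_def by auto
  have hU: "H holomorphic_on U"
  proof (rule holomorphic_transform[of "\<lambda>x. F x / T x"])
    show "(\<lambda>x. F x / T x) holomorphic_on U"
      using holomorphic_on_subset[OF hF US] holomorphic_on_subset[OF hT US]
      by (intro holomorphic_intros) (auto simp: U_def)
  qed (auto simp: H_def U_def)
  have hH: "H holomorphic_on S"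
    unfolding holomorphic_on_open[OF oS]
  proof
    fix x assume xS: "x \<in> S"
    show "\<exists>f'. (H has_field_derivative f') (at x)"
    proof (cases "T x = 0")
      case False
      then have "x \<in> U" using xS by (auto simp: U_def)
      then show ?thesis using holomorphic_derivI[OF hU oU] by blast
    next
      case True
      have x0: "x \<noteq> 0" using xS by (auto simp: S_def)
      have Fx: "F x = 0" unfolding F_def
        by (rule gg_zero_FF[OF p nz x0]) (use True in \<open>simp add: T_def\<close>)
      have dTx: "deriv T x \<noteq> 0" unfolding T_def
        by (rule gg_deriv_nz[OF p nz(2) x0 _ g1]) (use True in \<open>simp add: T_def\<close>)
      have dF: "(F has_field_derivative deriv F x) (at x)"
        by (rule holomorphic_derivI[OF hF oS xS])
      have dT: "(T has_field_derivative deriv T x) (at x)"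
        by (rule holomorphic_derivI[OF hT oS xS])
      have l1: "((\<lambda>z. (F z - F x) / (z - x)) \<longlongrightarrow> deriv F x) (at x)"
        using dF by (simp add: has_field_derivative_iff)
      have l2: "((\<lambda>z. (T z - T x) / (z - x)) \<longlongrightarrow> deriv T x) (at x)"
        using dT by (simp add: has_field_derivative_iff)
      have l3: "((\<lambda>z. ((F z - F x) / (z - x)) / ((T z - T x) / (z - x))) \<longlongrightarrow> deriv F x / deriv T x) (at x)"
        by (rule tendsto_divide[OF l1 l2 dTx])
      have ev1: "eventually (\<lambda>z. (T z - T x) / (z - x) \<noteq> 0) (at x)"
        by (rule tendsto_imp_eventually_ne[OF l2 dTx])
      have ev2: "eventually (\<lambda>z. z \<in> S) (at x)"
        using oS xS by (simp add: eventually_at_topological) blast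
      have ev3: "eventually (\<lambda>z. T z \<noteq> 0 \<and> z \<in> S) (at x)"
        using eventually_conj[OF ev1 ev2] by (rule eventually_mono) (use True in auto)
      have l4: "((\<lambda>z. F z / T z) \<longlongrightarrow> deriv F x / deriv T x) (at x)"
      proof (rule Lim_transform_eventually[OF l3])
        show "eventually (\<lambda>z. ((F z - F x) / (z - x)) / ((T z - T x) / (z - x)) = F z / T z) (at x)"
        proof -
          have "eventually (\<lambda>z. z \<noteq> x) (at x)" by (simp add: eventually_at_filter)
          then show ?thesis
            by (rule eventually_mono) (auto simp: Fx True divide_simps)
        qed
      qed
      obtain r where r: "r > 0" "\<And>z. z \<noteq> x \<Longrightarrow> dist z x < r \<Longrightarrow> T z \<noteq> 0 \<and> z \<in> S"
        using ev3 unfolding eventually_at by auto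
      have ball_S: "ball x r \<subseteq> S"
      proof
        fix z assume "z \<in> ball x r"
        then show "z \<in> S" using r xS by (cases "z = x") (auto simp: dist_commute)
      qed
      have hb: "(\<lambda>z. F z / T z) holomorphic_on ball x r - {x}"
        using holomorphic_on_subset[OF hF, of "ball x r - {x}"] holomorphic_on_subset[OF hT, of "ball x r - {x}"] ball_S r
        by (intro holomorphic_intros) (auto simp: dist_commute)
      have "(\<lambda>y. if y = x then deriv F x / deriv T x else F y / T y) holomorphic_on ball x r"
        by (rule removable_singularity[OF hb _ l4]) auto
      then have "H holomorphic_on ball x r"
      proof (rule holomorphic_transform)
        fix z assume "z \<in> ball x r"
        then show "(if z = x then deriv F x / deriv T x else F z / T z) = H z"
          using r True by (auto simp: H_def dist_commute)
      qed
      then show ?thesis using holomorphic_derivI[of H "ball x r" x] r by auto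
    qed
  qed
  have Tsh: "T (p * z) = T z / z^2" if "z \<in> S" for z
    unfolding T_def by (rule gg_shift[OF p]) (use that nz in \<open>auto simp: S_def\<close>)
  have Fsh: "F (p * z) = F z / z^2" if "z \<in> S" for z
    unfolding F_def by (rule FF_shift[OF p]) (use that nz in \<open>auto simp: S_def\<close>)
  have vU: "v \<in> U" using g2 nz by (auto simp: U_def S_def T_def)
  have conS: "connected S"
    unfolding S_def using connected_open_delete[of "UNIV :: complex set" 0]
    by (simp add: Compl_eq_Diff_UNIV connected_UNIV)
  have Hsh: "H (p * z) = H z" if "z \<in> S" for z
  proof (rule analytic_continuation_open[OF oU oS _ conS US, of "\<lambda>z. H (p * z)" H])
    show "U \<noteq> {}" using vU by auto
    have a: "(\<lambda>z. p * z) holomorphic_on S" by (auto intro!: holomorphic_intros)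
    have b: "(\<lambda>z. p * z) ` S \<subseteq> S" using p by (auto simp: S_def)
    show "(\<lambda>z. H (p * z)) holomorphic_on S"
      using holomorphic_on_compose_gen[OF a hH b] by (simp add: o_def)
    show "H holomorphic_on S" by (rule hH)
    show "z \<in> S" by (rule that)
    fix w assume w: "w \<in> U"
    then have wS: "w \<in> S" and Tw: "T w \<noteq> 0" by (auto simp: U_def)
    have w0: "w \<noteq> 0" using wS by (auto simp: S_def)
    have "T (p * w) \<noteq> 0" using Tsh[OF wS] Tw w0 by simp
    then show "H (p * w) = H w"
      using Tsh[OF wS] Fsh[OF wS] Tw w0 by (simp add: H_def)
  qed
  have Hpowi: "H (p powi m * z) = H z" if "z \<in> S" for z m
  proof (induction m rule: int_induct[where k=0])
    case base then show ?case by simp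
  next
    case (step1 i)
    have e: "p powi (i + 1) * z = p * (p powi i * z)" using p(2) by (simp add: power_int_add)
    have "p powi i * z \<in> S" using that p(2) by (auto simp: S_def)
    then show ?case unfolding e using Hsh step1 by simp
  next
    case (step2 i)
    have e: "p powi i * z = p * (p powi (i - 1) * z)" using p(2) by (simp add: power_int_diff)
    have "p powi (i - 1) * z \<in> S" using that p(2) by (auto simp: S_def)
    then show ?case using step2 Hsh e by metis
  qed
  define K where "K = cball (0::complex) 1 - ball 0 (norm p)"
  have cK: "compact K" unfolding K_def by (intro compact_diff) auto
  have KS: "K \<subseteq> S" using p by (auto simp: K_def S_def)
  have "compact (H ` K)"
    by (rule compact_continuous_image[OF _ cK])
       (rule holomorphic_on_imp_continuous_on[OF holomorphic_on_subset[OF hH KS]])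
  then obtain M where M: "\<And>z. z \<in> K \<Longrightarrow> norm (H z) \<le> M"
    using compact_imp_bounded bounded_iff by (metis imageI)
  have Hb: "norm (H z) \<le> M" if "z \<in> S" for z
  proof -
    have z0: "z \<noteq> 0" using that by (auto simp: S_def)
    obtain n :: int where n: "norm p powi (n + 1) < norm z" "norm z \<le> norm p powi n"
      using exists_powi_annulus[of "norm p" "norm z"] p z0 by auto
    have pn: "norm p powi n > 0" using p by simp
    have "norm (p powi (- n) * z) = norm z / norm p powi n"
      by (simp add: norm_mult norm_power_int power_int_minus divide_inverse mult.commute norm_inverse)
    moreover have "norm p powi (n + 1) = norm p * norm p powi n"
      using p by (simp add: power_int_add)
    ultimately have "p powi (- n) * z \<in> K"
      using n pn by (auto simp: K_def field_simps)
    then have "norm (H (p powi (- n) * z)) \<le> M" by (rule M)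
    then show ?thesis using Hpowi[OF that] by simp
  qed
  obtain G where G: "G holomorphic_on UNIV" "\<And>z. z \<in> UNIV - {0} \<Longrightarrow> G z = H z"
  proof -
    have "H holomorphic_on UNIV - {0}" using hH by (simp add: S_def Compl_eq_Diff_UNIV)
    moreover have "H \<in> O[at 0](\<lambda>_. 1)"
    proof (rule bigoI[of _ M])
      show "eventually (\<lambda>z. norm (H z) \<le> M * norm (1::complex)) (at 0)"
        unfolding eventually_at_filter by (rule always_eventually) (auto intro!: Hb simp: S_def)
    qed
    ultimately show ?thesis using holomorphic_on_extend[of H UNIV 0] that by auto
  qed
  have "bounded (range G)"
  proof -
    have "range G \<subseteq> insert (G 0) (cball 0 M)"
    proof
      fix w assume "w \<in> range G"
      then obtain z where z: "w = G z" by auto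
      show "w \<in> insert (G 0) (cball 0 M)"
      proof (cases "z = 0")
        case False
        then show ?thesis using G(2)[of z] Hb[of z] z by (auto simp: S_def)
      qed (use z in auto)
    qed
    then show ?thesis by (meson bounded_cball bounded_insert bounded_subset)
  qed
  then obtain c where c: "\<And>z. G z = c"
    using Liouville_theorem[OF G(1)] by (auto simp: constant_on_def)
  have Hc: "H z = c" if "z \<in> S" for z using c G(2) that by (auto simp: S_def)
  have "T v \<noteq> 0" using vU by (auto simp: U_def)
  moreover have "F v = 0" unfolding F_def by (rule FF_v[OF p(1) nz])
  ultimately have "H v = 0" by (simp add: H_def)
  then have c0: "c = 0" using Hc[of v] nz by (auto simp: S_def)
  have xS: "x \<in> S" using x by (auto simp: S_def)
  show ?thesis
  proof (cases "T x = 0")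
    case True
    then show ?thesis unfolding F_def by (intro gg_zero_FF[OF p nz x]) (simp add: T_def)
  next
    case False
    then have "F x / T x = 0" using Hc[OF xS] c0 by (simp add: H_def)
    then show ?thesis using False by (simp add: F_def)
  qed
qed

lemma th_comp_holo:
  assumes "norm p < 1" "f holomorphic_on A" "\<And>z. z \<in> A \<Longrightarrow> f z \<noteq> 0"
  shows "(\<lambda>z. theta (f z) p) holomorphic_on A"
proof -
  have "f ` A \<subseteq> - {0}" using assms(3) by auto
  then show ?thesis
    using holomorphic_on_compose_gen[OF assms(2) th_holo[OF assms(1)]] by (simp add: o_def)
qed

lemma sq_eq_finite: "finite {w::complex. w * w = c}"
proof (rule finite_subset)
  show "{w::complex. w * w = c} \<subseteq> {csqrt c, - csqrt c}"
  proof
    fix w assume "w \<in> {w::complex. w * w = c}"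
    then have "w^2 = c" by (simp add: power2_eq_square)
    then have "w^2 = (csqrt c)^2" by (simp add: power2_csqrt)
    then have "w = csqrt c \<or> w = - csqrt c" by (simp only: power2_eq_iff)
    then show "w \<in> {csqrt c, - csqrt c}" by auto
  qed
qed auto

lemma core_all:
  assumes p: "norm p < 1" "p \<noteq> 0" and nz: "x \<noteq> 0" "y \<noteq> 0" "u0 \<noteq> 0" "v \<noteq> 0"
  shows "FF p y u0 v x = 0"
proof (rule ccontr)
  assume ne: "FF p y u0 v x \<noteq> 0"
  define S where "S = (- {0} :: complex set)"
  define Phi where "Phi = (\<lambda>u. FF p y u v x)"
  have oS: "open S" by (auto simp: S_def)
  have hPhi: "Phi holomorphic_on S"
  proof -
    have h: "(\<lambda>u. theta (f u) p) holomorphic_on S" if "f holomorphic_on S" "\<And>z. z \<in> S \<Longrightarrow> f z \<noteq> 0" for f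
      by (rule th_comp_holo[OF p(1) that])
    show ?thesis unfolding Phi_def FF_def gg_def
      by (intro holomorphic_intros h) (use nz in \<open>auto simp: S_def\<close>)
  qed
  define E where "E = {u \<in> S. theta (u * u) p = 0 \<or> gg p u v = 0}"
  have zero: "Phi u = 0" if "u \<in> S" "u \<notin> E" for u
    using core_generic[OF p nz(2) _ nz(4) _ _ nz(1), of u] that by (auto simp: E_def S_def Phi_def)
  have cE: "countable E"
  proof (rule countable_subset)
    show "E \<subseteq> (\<Union>m. {w. w * w = p powi m}) \<union> (\<Union>m. {p powi m / v}) \<union> (\<Union>m. {v / p powi m})"
    proof
      fix u assume "u \<in> E"
      then have uS: "u \<noteq> 0" and h: "theta (u * u) p = 0 \<or> theta (v * u) p = 0 \<or> theta (v / u) p = 0"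
        by (auto simp: E_def S_def gg_def)
      from h show "u \<in> (\<Union>m. {w. w * w = p powi m}) \<union> (\<Union>m. {p powi m / v}) \<union> (\<Union>m. {v / p powi m})"
      proof (elim disjE)
        assume "theta (u * u) p = 0"
        then obtain m where "u * u = p powi m" using th_zero_imp[OF p] uS by force
        then show ?thesis by blast
      next
        assume "theta (v * u) p = 0"
        then obtain m where "v * u = p powi m" using th_zero_imp[OF p] uS nz by force
        then have "u = p powi m / v" using nz by (simp add: field_simps)
        then show ?thesis by blast
      next
        assume "theta (v / u) p = 0"
        then obtain m where "v / u = p powi m" using th_zero_imp[OF p] uS nz by force
        then have "u = v / p powi m" using nz uS p by (auto simp: field_simps)
        then show ?thesis by blast
      qed
    qed
    show "countable ((\<Union>m. {w. w * w = p powi m}) \<union> (\<Union>m. {p powi m / v}) \<union> (\<Union>m. {v / p powi m}))"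
    proof -
      have "countable (\<Union>m. {w. w * w = p powi m})"
        by (rule countable_UN) (auto intro: countable_finite sq_eq_finite)
      moreover have "countable (\<Union>m. {p powi m / v})"
        by (rule countable_UN) auto
      moreover have "countable (\<Union>m. {v / p powi m})"
        by (rule countable_UN) auto
      ultimately show ?thesis by auto
    qed
  qed
  define V where "V = Phi -` (- {0}) \<inter> S"
  have oV: "open V"
    using continuous_on_open_vimage[OF oS, of Phi] holomorphic_on_imp_continuous_on[OF hPhi]
    unfolding V_def by auto
  have u0V: "u0 \<in> V" using ne nz by (auto simp: V_def Phi_def S_def)
  obtain e where e: "e > 0" "ball u0 e \<subseteq> V" using oV u0V open_contains_ball by blast
  have "ball u0 e \<subseteq> E"
  proof
    fix u assume "u \<in> ball u0 e"
    then have "u \<in> V" using e by auto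
    then show "u \<in> E" using zero by (auto simp: V_def)
  qed
  then have "countable (ball u0 e)" using cE countable_subset by blast
  then show False using uncountable_ball[of e u0] e by simp
qed

lemma add_formula:
  assumes p: "norm p < 1" and nz: "a \<noteq> 0" "b \<noteq> 0" "c \<noteq> 0" "d \<noteq> 0"
  shows "theta (a/b) p * theta (a/c) p * theta (a/d) p * theta (b*c*d/a) p
       - theta b p * theta c p * theta d p * theta (a^2/(b*c*d)) p
       = -(b*c*d/a) * (theta a p * theta (a/(b*c)) p * theta (a/(b*d)) p * theta (a/(c*d)) p)"
proof (cases "p = 0")
  case True
  show ?thesis unfolding True th_p0 using nz
    by (simp add: field_simps power2_eq_square)
next
  case False
  define sq where "sq = csqrt (c * d)"
  have ss: "sq * sq = c * d" unfolding sq_def using power2_csqrt[of "c*d"] by (simp add: power2_eq_square)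
  have s0: "sq \<noteq> 0" using ss nz by auto
  have h0: "FF p (a/(b * sq)) sq (c/sq) (a/sq) = 0"
    by (rule core_all[OF p False]) (use nz s0 in auto)
  have e1: "a / sq * (a / (b * sq)) = a^2/(b*c*d)" using nz s0 ss
    by (simp add: field_simps power2_eq_square)
  have e2: "a / sq / (a / (b * sq)) = b" using nz s0 by (simp add: field_simps)
  have e3: "sq * (c / sq) = c" using s0 by simp
  have e4: "sq / (c / sq) = d" using nz s0 ss by (simp add: field_simps)
  have e5: "a / sq * (c / sq) = a / d" using nz s0 ss by (simp add: field_simps)
  have e6: "a / sq / (c / sq) = a / c" using nz s0 by (simp add: field_simps)
  have e7: "sq * (a / (b * sq)) = a / b" using nz s0 by (simp add: field_simps)
  have e8: "sq / (a / (b * sq)) = b * c * d / a" using nz s0 ss by (simp add: field_simps)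
  have e9: "a / (b * sq) * (c / sq) = a / (b * d)" using nz s0 ss by (simp add: field_simps)
  have e10: "a / (b * sq) / (c / sq) = a / (b * c)" using nz s0 by (simp add: field_simps)
  have e11: "a / sq * sq = a" using s0 by simp
  have e12: "a / sq / sq = a / (c * d)" using nz s0 ss by (simp add: field_simps)
  have h: "theta (a^2/(b*c*d)) p * theta b p * (theta c p * theta d p)
     - theta (a / d) p * theta (a / c) p * (theta (a / b) p * theta (b * c * d / a) p)
     - b * c * d / a * (theta (a / (b * d)) p * theta (a / (b * c)) p) * (theta a p * theta (a / (c * d)) p) = 0"
    using h0 unfolding FF_def gg_def e1 e2 e3 e4 e5 e6 e7 e8 e9 e10 e11 e12 .
  show ?thesis using h by (simp add: algebra_simps)
qed

lemma ratio_lemma: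
  assumes p: "norm p < 1" and nz: "a \<noteq> 0" "b \<noteq> 0" "c \<noteq> 0" "d \<noteq> 0"
    and D1: "theta_list [a / (b * c * d), a / d, a / c, a / b] p \<noteq> 0"
    and D2: "theta_list [a / b, a / c, a / d, b * c * d / a] p \<noteq> 0"
  shows "theta_list [a, a / (b * c), a / (b * d), a / (c * d)] p /
         theta_list [a / (b * c * d), a / d, a / c, a / b] p
       = 1 - theta_list [b, c, d, a ^ 2 / (b * c * d)] p /
             theta_list [a / b, a / c, a / d, b * c * d / a] p"
proof -
  have inv: "theta (b * c * d / a) p = - theta (a / (b * c * d)) p * (b * c * d / a)"
  proof -
    have "b * c * d / a = 1 / (a / (b * c * d))" by simp
    then have "theta (b * c * d / a) p = - theta (a / (b * c * d)) p / (a / (b * c * d))"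
      using th_inv[OF p, of "a / (b * c * d)"] nz by simp
    then show ?thesis by simp
  qed
  define N1 where "N1 = theta a p * theta (a/(b*c)) p * theta (a/(b*d)) p * theta (a/(c*d)) p"
  define D1' where "D1' = theta (a / (b * c * d)) p * theta (a / d) p * theta (a / c) p * theta (a / b) p"
  define N2 where "N2 = theta b p * theta c p * theta d p * theta (a^2/(b*c*d)) p"
  define D2' where "D2' = theta (a/b) p * theta (a/c) p * theta (a/d) p * theta (b*c*d/a) p"
  have add: "D2' - N2 = -(b*c*d/a) * N1"
    unfolding D2'_def N2_def N1_def by (rule add_formula[OF p nz])
  have D2e: "D2' = -(b*c*d/a) * D1'" unfolding D2'_def D1'_def inv by (simp add: algebra_simps)
  have d1: "D1' \<noteq> 0" using D1 by (simp add: theta_list_def D1'_def algebra_simps)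
  have d2: "D2' \<noteq> 0" using D2 by (simp add: theta_list_def D2'_def algebra_simps)
  have k: "b * c * d / a \<noteq> 0" using nz by simp
  have "N1 / D1' = 1 - N2 / D2'"
  proof -
    have "1 - N2 / D2' = (D2' - N2) / D2'" using d2 by (simp add: field_simps)
    also have "\<dots> = (-(b*c*d/a) * N1) / D2'" by (simp only: add)
    also have "\<dots> = (-(b*c*d/a) * N1) / (-(b*c*d/a) * D1')" by (simp only: D2e)
    also have "\<dots> = N1 / D1'" by (rule mult_divide_mult_cancel_left) (use k in simp)
    finally show ?thesis by simp
  qed
  then show ?thesis by (simp add: theta_list_def N1_def D1'_def N2_def D2'_def algebra_simps)
qed

lemma conv_sym:
  fixes R S :: "nat \<Rightarrow> 'a::comm_ring_1"
  shows "(\<Sum>k\<le>m. R k * S (m - k)) = (\<Sum>k\<le>m. S k * R (m - k))"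
proof -
  have "(\<Sum>k\<le>m. S k * R (m - k)) = (\<Sum>k<Suc m. S k * R (m - k))"
    by (simp add: lessThan_Suc_atMost)
  also have "\<dots> = (\<Sum>i<Suc m. S (Suc m - Suc i) * R (m - (Suc m - Suc i)))"
    by (rule sum.nat_diff_reindex[symmetric])
  also have "\<dots> = (\<Sum>i<Suc m. R i * S (m - i))"
    by (rule sum.cong) (auto simp: mult.commute)
  finally show ?thesis by (simp add: lessThan_Suc_atMost)
qed

lemma conv_gen:
  fixes R S :: "nat \<Rightarrow> 'a::comm_ring_1"
  assumes "R 0 = 1" "S 0 = 1"
  shows "(\<Sum>k\<le>n. (R k - R (Suc k)) * (1 - S (Suc n - k)))
       = (\<Sum>k\<le>n. (S k - S (Suc k)) * (1 - R (Suc n - k)))"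
proof -
  define C where "C = (\<lambda>m. \<Sum>k\<le>m. R k * S (m - k))"
  have C': "C m = (\<Sum>k\<le>m. S k * R (m - k))" for m unfolding C_def by (rule conv_sym)
  have expand: "(\<Sum>k\<le>n. (R k - R (Suc k)) * (1 - S (Suc n - k)))
     = (R 0 - R (Suc n)) - (\<Sum>k\<le>n. R k * S (Suc n - k)) + (\<Sum>k\<le>n. R (Suc k) * S (Suc n - k))"
    for R S :: "nat \<Rightarrow> 'a"
  proof -
    have "(\<Sum>k\<le>n. (R k - R (Suc k)) * (1 - S (Suc n - k)))
       = (\<Sum>k\<le>n. R k - R (Suc k)) - (\<Sum>k\<le>n. R k * S (Suc n - k)) + (\<Sum>k\<le>n. R (Suc k) * S (Suc n - k))"
      by (simp add: algebra_simps sum.distrib sum_subtractf)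
    also have "(\<Sum>k\<le>n. R k - R (Suc k)) = R 0 - R (Suc n)" by (rule sum_telescope)
    finally show ?thesis .
  qed
  have A: "(\<Sum>k\<le>n. R k * S (Suc n - k)) = C (Suc n) - R (Suc n) * S 0"
    unfolding C_def by simp
  have A': "(\<Sum>k\<le>n. S k * R (Suc n - k)) = C (Suc n) - S (Suc n) * R 0"
    unfolding C' by simp
  have B: "(\<Sum>k\<le>n. R (Suc k) * S (Suc n - k)) = C (Suc (Suc n)) - R 0 * S (Suc (Suc n)) - R (Suc (Suc n)) * S 0"
    unfolding C_def by (subst sum.atMost_Suc_shift) simp
  have B': "(\<Sum>k\<le>n. S (Suc k) * R (Suc n - k)) = C (Suc (Suc n)) - S 0 * R (Suc (Suc n)) - S (Suc (Suc n)) * R 0"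
    unfolding C' by (subst sum.atMost_Suc_shift) simp
  show ?thesis unfolding expand[of R S] expand[of S R] A A' B B' using assms
    by (simp add: algebra_simps)
qed

theorem mainTheorem11:
  fixes p P :: complex and a b c d A B C D :: "nat \<Rightarrow> complex" and n :: nat
  assumes "norm p < 1" and "norm P < 1"
    and "\<And>k. a k \<noteq> 0" and "\<And>k. b k \<noteq> 0" and "\<And>k. c k \<noteq> 0" and "\<And>k. d k \<noteq> 0"
    and "\<And>k. A k \<noteq> 0" and "\<And>k. B k \<noteq> 0" and "\<And>k. C k \<noteq> 0" and "\<And>k. D k \<noteq> 0"
    and "\<And>k. theta_list [a k / (b k * c k * d k), a k / d k, a k / c k, a k / b k] p \<noteq> 0"
    and "\<And>k. theta_list [a k / b k, a k / c k, a k / d k, b k * c k * d k / a k] p \<noteq> 0"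
    and "\<And>k. theta_list [A k / (B k * C k * D k), A k / D k, A k / C k, A k / B k] P \<noteq> 0"
    and "\<And>k. theta_list [A k / B k, A k / C k, A k / D k, B k * C k * D k / A k] P \<noteq> 0"
  shows "(\<Sum>k=0..n. lam a b c d p k * (1 - (\<Prod>j=0..n-k. wfac A B C D P j)))
       = (\<Sum>k=0..n. lam A B C D P k * (1 - (\<Prod>j=0..n-k. wfac a b c d p j)))"
proof -
  define r where "r = wfac a b c d p"
  define s where "s = wfac A B C D P"
  define R where "R = (\<lambda>k. \<Prod>j<k. r j)"
  define S where "S = (\<lambda>k. \<Prod>j<k. s j)"
  have lam1: "lam a b c d p k = R k - R (Suc k)" for k
  proof -
    have w: "theta_list [a k, a k / (b k * c k), a k / (b k * d k), a k / (c k * d k)] p /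
         theta_list [a k / (b k * c k * d k), a k / d k, a k / c k, a k / b k] p = 1 - r k"
      unfolding r_def wfac_def by (rule ratio_lemma) (use assms in auto)
    show ?thesis unfolding lam_def w by (simp add: R_def r_def algebra_simps)
  qed
  have lam2: "lam A B C D P k = S k - S (Suc k)" for k
  proof -
    have w: "theta_list [A k, A k / (B k * C k), A k / (B k * D k), A k / (C k * D k)] P /
         theta_list [A k / (B k * C k * D k), A k / D k, A k / C k, A k / B k] P = 1 - s k"
      unfolding s_def wfac_def by (rule ratio_lemma) (use assms in auto)
    show ?thesis unfolding lam_def w by (simp add: S_def s_def algebra_simps)
  qed
  have prS: "(\<Prod>j=0..m. wfac A B C D P j) = S (Suc m)" for m
    unfolding S_def s_def by (simp add: atLeast0AtMost lessThan_Suc_atMost)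
  have prR: "(\<Prod>j=0..m. wfac a b c d p j) = R (Suc m)" for m
    unfolding R_def r_def by (simp add: atLeast0AtMost lessThan_Suc_atMost)
  have "(\<Sum>k=0..n. lam a b c d p k * (1 - (\<Prod>j=0..n-k. wfac A B C D P j)))
      = (\<Sum>k\<le>n. (R k - R (Suc k)) * (1 - S (Suc n - k)))"
    unfolding prS unfolding lam1 atLeast0AtMost
    by (rule sum.cong) (auto simp: Suc_diff_le)
  also have "\<dots> = (\<Sum>k\<le>n. (S k - S (Suc k)) * (1 - R (Suc n - k)))"
    by (rule conv_gen) (simp_all add: R_def S_def)
  also have "\<dots> = (\<Sum>k=0..n. lam A B C D P k * (1 - (\<Prod>j=0..n-k. wfac a b c d p j)))"
    unfolding prR unfolding lam2 atLeast0AtMost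
    by (rule sum.cong) (auto simp: Suc_diff_le)
  finally show ?thesis .
qed

end
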